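(* For every prime $p$ and every $k\ge 2$, $cw(\mathrm{Syl}_p(S_{p^k}))=1$. For every prime $p>2$ and every $k\ge 2$, $cw(\mathrm{Syl}_p(A_{p^k}))=1$.
   Context: $\mathrm{Syl}_p(G)$ denotes a Sylow $p$-subgroup of $G$; $S_n$ and $A_n$ are the symmetric and alternating groups. The commutator width $cw(G)$ is the maximum, over elements $g$ of the derived subgroup $G'$, of the least number of commutators whose product is $g$. *)

theory Defs
  imports "HOL-Algebra.Sym_Groups" "HOL-Algebra.Generated_Groups" "HOL-Computational_Algebra.Primes"
begin

text \<open>Commutator, with the same convention as the library's derived_set.\<close>
definition commutator :: "('a, 'b) monoid_scheme \<Rightarrow> 'a \<Rightarrow> 'a \<Rightarrow> 'a" where
  "commutator G x y = x \<otimes>\<^bsub>G\<^esub> y \<otimes>\<^bsub>G\<^esub> inv\<^bsub>G\<^esub> x \<otimes>\<^bsub>G\<^esub> inv\<^bsub>G\<^esub> y"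

definition comm_length :: "('a, 'b) monoid_scheme \<Rightarrow> 'a \<Rightarrow> nat" where
  "comm_length G g = (LEAST n. \<exists>xs ys. length xs = n \<and> length ys = n \<and>
      set xs \<subseteq> carrier G \<and> set ys \<subseteq> carrier G \<and>
      g = foldr (\<lambda>(x, y) acc. commutator G x y \<otimes>\<^bsub>G\<^esub> acc) (zip xs ys) \<one>\<^bsub>G\<^esub>)"

definition commutator_width :: "('a, 'b) monoid_scheme \<Rightarrow> nat" where
  "commutator_width G = Sup (comm_length G ` derived G (carrier G))"

definition is_sylow :: "nat \<Rightarrow> ('a, 'b) monoid_scheme \<Rightarrow> 'a set \<Rightarrow> bool" where
  "is_sylow p G P \<longleftrightarrow> subgroup P G \<and> card P = p ^ multiplicity p (order G)"

end

theory Submission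
  imports Defs "HOL-Algebra.Group_Action"
begin


definition enc :: "nat \<Rightarrow> nat \<Rightarrow> nat \<Rightarrow> nat" where
  "enc p x w = (w - 1) * p + x + 1"
definition dx :: "nat \<Rightarrow> nat \<Rightarrow> nat" where "dx p n = (n - 1) mod p"
definition dw :: "nat \<Rightarrow> nat \<Rightarrow> nat" where "dw p n = (n - 1) div p + 1"

lemma dx_lt: "0 < p \<Longrightarrow> dx p n < p" by (simp add: dx_def)

lemma dw_range: "0 < p \<Longrightarrow> n \<in> {1..p * M} \<Longrightarrow> dw p n \<in> {1..M}"
proof -
  assume p: "0 < p" and n: "n \<in> {1..p * M}"
  have "n \<le> M * p" using n by (simp add: mult.commute)
  moreover have "n - 1 < n" using n by simp
  ultimately have "n - 1 < M * p" by linarith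
  hence "(n - 1) div p < M" using p by (simp add: div_less_iff_less_mult)
  thus ?thesis by (simp add: dw_def)
qed

lemma enc_dx_dw: "0 < p \<Longrightarrow> 1 \<le> n \<Longrightarrow> enc p (dx p n) (dw p n) = n"
  by (simp add: enc_def dx_def dw_def mult.commute)

lemma dx_enc: "x < p \<Longrightarrow> dx p (enc p x w) = x"
  by (simp add: enc_def dx_def)

lemma dw_enc: "x < p \<Longrightarrow> 1 \<le> w \<Longrightarrow> dw p (enc p x w) = w"
  by (simp add: enc_def dw_def)

lemma enc_range: "x < p \<Longrightarrow> w \<in> {1..M} \<Longrightarrow> enc p x w \<in> {1..p * M}"
proof -
  assume x: "x < p" and w: "w \<in> {1..M}"
  have "(w - 1) * p + x + 1 \<le> (w - 1) * p + p" using x by simp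
  also have "\<dots> = w * p" using w by (cases w) auto
  also have "\<dots> \<le> M * p" using w by simp
  finally show ?thesis by (simp add: enc_def mult.commute)
qed

lemma enc_inj: "x < p \<Longrightarrow> x' < p \<Longrightarrow> 1 \<le> w \<Longrightarrow> 1 \<le> w' \<Longrightarrow>
   enc p x w = enc p x' w' \<longleftrightarrow> x = x' \<and> w = w'"
  by (metis dx_enc dw_enc)

definition mk :: "nat \<Rightarrow> nat \<Rightarrow> nat \<Rightarrow> (nat \<Rightarrow> nat \<Rightarrow> nat) \<Rightarrow> nat \<Rightarrow> nat" where
  "mk p k t g n = (if n \<in> {1..p ^ Suc k} then enc p ((dx p n + t) mod p) (g (dx p n) (dw p n)) else n)"

lemma mk_enc:
  assumes "0 < p" "x < p" "w \<in> {1..p ^ k}"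
  shows "mk p k t g (enc p x w) = enc p ((x + t) mod p) (g x w)"
proof -
  have "enc p x w \<in> {1..p ^ Suc k}" using enc_range[OF assms(2,3)] by simp
  thus ?thesis using assms by (simp add: mk_def dx_enc dw_enc)
qed

lemma mk_out: "n \<notin> {1..p ^ Suc k} \<Longrightarrow> mk p k t g n = n"
  unfolding mk_def by auto

lemma range_cases:
  assumes "0 < p" "n \<in> {1..p ^ Suc k}"
  obtains x w where "x < p" "w \<in> {1..p ^ k}" "n = enc p x w"
proof -
  have "dw p n \<in> {1..p ^ k}" using dw_range[OF assms(1), of n "p ^ k"] assms by simp
  thus ?thesis using that[of "dx p n" "dw p n"] assms dx_lt enc_dx_dw by auto
qed

lemma mk_cong: "0 < p \<Longrightarrow> (\<And>a. a < p \<Longrightarrow> g a = g' a) \<Longrightarrow> t mod p = t' mod p \<Longrightarrow> mk p k t g = mk p k t' g'"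
proof (rule ext)
  fix n assume p: "0 < p" and gg: "\<And>a. a < p \<Longrightarrow> g a = g' a" and tt: "t mod p = t' mod p"
  show "mk p k t g n = mk p k t' g' n"
  proof (cases "n \<in> {1..p ^ Suc k}")
    case False thus ?thesis by (simp add: mk_out)
  next
    case True
    then obtain x w where xw: "x < p" "w \<in> {1..p ^ k}" "n = enc p x w" using range_cases p by blast
    have "(x + t) mod p = (x + t') mod p" using tt by (metis mod_add_right_eq)
    thus ?thesis using xw p gg by (simp add: mk_enc)
  qed
qed

lemma mk_comp:
  assumes p: "0 < p" and g': "\<And>a. a < p \<Longrightarrow> g' a ` {1..p ^ k} \<subseteq> {1..p ^ k}"
  shows "mk p k t g \<circ> mk p k t' g' = mk p k ((t + t') mod p) (\<lambda>i. g ((i + t') mod p) \<circ> g' i)"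
proof (rule ext)
  fix n
  show "(mk p k t g \<circ> mk p k t' g') n = mk p k ((t + t') mod p) (\<lambda>i. g ((i + t') mod p) \<circ> g' i) n"
  proof (cases "n \<in> {1..p ^ Suc k}")
    case False thus ?thesis by (simp add: mk_out)
  next
    case True
    then obtain x w where xw: "x < p" "w \<in> {1..p ^ k}" "n = enc p x w" using range_cases p by blast
    have gw: "g' x w \<in> {1..p ^ k}" using g' xw by blast
    have m: "(x + t') mod p < p" using p by simp
    have "(mk p k t g \<circ> mk p k t' g') n = enc p (((x + t') mod p + t) mod p) (g ((x + t') mod p) (g' x w))"
      using xw gw m p by (simp add: mk_enc)
    also have "\<dots> = enc p ((x + (t + t') mod p) mod p) (g ((x + t') mod p) (g' x w))"
    proof -
      have "((x + t') mod p + t) mod p = (x + t' + t) mod p" by (rule mod_add_left_eq)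
      moreover have "(x + (t + t') mod p) mod p = (x + (t + t')) mod p" by (rule mod_add_right_eq)
      ultimately show ?thesis by (simp add: ac_simps)
    qed
    also have "\<dots> = mk p k ((t + t') mod p) (\<lambda>i. g ((i + t') mod p) \<circ> g' i) n"
      using xw p by (simp add: mk_enc)
    finally show ?thesis .
  qed
qed

lemma mk_id: "0 < p \<Longrightarrow> mk p k 0 (\<lambda>_. id) = id"
proof (rule ext)
  fix n assume p: "0 < p"
  show "mk p k 0 (\<lambda>_. id) n = id n"
  proof (cases "n \<in> {1..p ^ Suc k}")
    case False thus ?thesis by (simp add: mk_out)
  next
    case True
    then obtain x w where xw: "x < p" "w \<in> {1..p ^ k}" "n = enc p x w" using range_cases p by blast
    thus ?thesis using p by (simp add: mk_enc)
  qed
qed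

lemma permutes_img: "f permutes S \<Longrightarrow> f ` S \<subseteq> S"
  by (simp add: permutes_image)

lemma mk_permutes:
  assumes p: "0 < p" and g: "\<And>a. a < p \<Longrightarrow> g a permutes {1..p ^ k}"
  shows "mk p k t g permutes {1..p ^ Suc k}"
proof -
  define t' where "t' = (p - t mod p) mod p"
  define g' where "g' = (\<lambda>i. inv' (g ((i + t') mod p)))"
  have tt: "(t + t') mod p = 0"
  proof -
    have "(t + t') mod p = (t + (p - t mod p)) mod p" unfolding t'_def by (rule mod_add_right_eq)
    also have "\<dots> = (t mod p + (p - t mod p)) mod p" by (rule mod_add_left_eq[symmetric])
    also have "\<dots> = 0" using p by (simp add: le_add_diff_inverse less_imp_le)
    finally show ?thesis .
  qed
  have tt2: "(t' + t) mod p = 0" using tt by (simp add: add.commute)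
  have g'p: "g' a permutes {1..p ^ k}" if "a < p" for a
    unfolding g'_def using g[of "(a + t') mod p"] p by (simp add: permutes_inv)
  have e1: "mk p k t g \<circ> mk p k t' g' = id"
  proof -
    have "mk p k t g \<circ> mk p k t' g' = mk p k ((t + t') mod p) (\<lambda>i. g ((i + t') mod p) \<circ> g' i)"
      by (rule mk_comp[OF p]) (use g'p in \<open>simp add: permutes_img\<close>)
    also have "\<dots> = mk p k 0 (\<lambda>_. id)"
    proof (rule mk_cong[OF p])
      fix a assume "a < p"
      have "(a + t') mod p < p" using p by simp
      thus "g ((a + t') mod p) \<circ> g' a = id" unfolding g'_def using g permutes_inv_o(1) by blast
    qed (use tt in simp)
    finally show ?thesis using mk_id p by simp
  qed
  have e2: "mk p k t' g' \<circ> mk p k t g = id"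
  proof -
    have "mk p k t' g' \<circ> mk p k t g = mk p k ((t' + t) mod p) (\<lambda>i. g' ((i + t) mod p) \<circ> g i)"
      by (rule mk_comp[OF p]) (use g in \<open>simp add: permutes_img\<close>)
    also have "\<dots> = mk p k 0 (\<lambda>_. id)"
    proof (rule mk_cong[OF p])
      fix a assume a: "a < p"
      have "((a + t) mod p + t') mod p = (a + t + t') mod p" by (rule mod_add_left_eq)
      also have "\<dots> = (a + (t + t') mod p) mod p" by (simp add: mod_add_right_eq add.assoc)
      also have "\<dots> = a" using tt a by simp
      finally have "((a + t) mod p + t') mod p = a" .
      thus "(g' ((a + t) mod p) \<circ> g a) = id" using g[OF a] by (simp add: g'_def permutes_inv_o)
    qed (use tt2 in simp)
    finally show ?thesis using mk_id p by simp
  qed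
  have "bij (mk p k t g)" using e1 e2 o_bij by blast
  moreover have "\<forall>n. n \<notin> {1..p ^ Suc k} \<longrightarrow> mk p k t g n = n" by (simp add: mk_out)
  ultimately show ?thesis by (simp add: permutes_def bij_iff)
qed

lemma mod_shift_inj: assumes "a < (p::nat)" "b < p" "(a + t) mod p = (b + t) mod p" shows "a = b"
proof -
  have *: "a = b" if "a \<le> b" "b < p" "(a + t) mod p = (b + t) mod p" for a b
  proof -
    have "p dvd b - a" using that mod_eq_dvd_iff_nat[of "a + t" "b + t" p] by simp
    moreover have "b - a < p" using that by simp
    ultimately show ?thesis using that by (metis diff_is_0_eq dvd_imp_le le_antisym not_less zero_less_diff)
  qed
  show ?thesis using *[of a b] *[of b a] assms by (cases "a \<le> b") auto
qed

lemma sum_mod_shift: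
  assumes p: "0 < (p::nat)"
  shows "(\<Sum>a<p. f ((a + t) mod p)) = (\<Sum>a<p. (f a :: nat))"
proof -
  have inj: "inj_on (\<lambda>a. (a + t) mod p) {..<p}"
    by (auto intro!: inj_onI dest: mod_shift_inj)
  have img: "(\<lambda>a. (a + t) mod p) ` {..<p} = {..<p}"
    by (rule endo_inj_surj) (use p inj in auto)
  show ?thesis using sum.reindex[OF inj, of f] img by simp
qed

fun W :: "nat \<Rightarrow> nat \<Rightarrow> (nat \<Rightarrow> nat) set" where
  "W p 0 = {id}"
| "W p (Suc k) = {mk p k t g | t g. t < p \<and> (\<forall>a<p. g a \<in> W p k)}"

lemma W_perm: "0 < p \<Longrightarrow> f \<in> W p k \<Longrightarrow> f permutes {1..p ^ k}"
proof (induction k arbitrary: f)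
  case 0 thus ?case by (simp add: permutes_id id_def[symmetric])
next
  case (Suc k)
  then obtain t g where "f = mk p k t g" "\<forall>a<p. g a \<in> W p k" by auto
  thus ?case using Suc mk_permutes by blast
qed

lemma W_id: "0 < p \<Longrightarrow> id \<in> W p k"
proof (induction k)
  case 0 thus ?case by (simp add: id_def)
next
  case (Suc k)
  have e: "id = mk p k 0 (\<lambda>_. id)" using mk_id Suc by simp
  have "\<forall>a<p. (\<lambda>_::nat. id::nat\<Rightarrow>nat) a \<in> W p k" using Suc by blast
  thus ?case unfolding W.simps using Suc.prems e by blast
qed

lemma W_comp: "0 < p \<Longrightarrow> f \<in> W p k \<Longrightarrow> h \<in> W p k \<Longrightarrow> f \<circ> h \<in> W p k"
proof (induction k arbitrary: f h)
  case 0 thus ?case by (simp add: id_def)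
next
  case (Suc k)
  obtain t g where f: "f = mk p k t g" "t < p" "\<forall>a<p. g a \<in> W p k" using Suc by auto
  obtain t' g' where h: "h = mk p k t' g'" "t' < p" "\<forall>a<p. g' a \<in> W p k" using Suc by auto
  have g'p: "\<And>a. a<p \<Longrightarrow> g' a ` {1..p^k} \<subseteq> {1..p^k}"
    using h(3) W_perm[OF Suc.prems(1)] permutes_img by blast
  have "f \<circ> h = mk p k ((t + t') mod p) (\<lambda>i. g ((i + t') mod p) \<circ> g' i)"
    unfolding f(1) h(1) by (rule mk_comp[OF Suc.prems(1) g'p])
  moreover have "g ((i + t') mod p) \<circ> g' i \<in> W p k" if "i < p" for i
  proof -
    have "(i + t') mod p < p" using Suc.prems by simp
    thus ?thesis using Suc.IH[OF Suc.prems(1)] f h that by blast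
  qed
  moreover have "(t + t') mod p < p" using Suc.prems by simp
  ultimately show ?case unfolding W.simps by blast
qed

lemma mk_inverse:
  fixes t :: nat and g :: "nat \<Rightarrow> nat \<Rightarrow> nat"
  assumes p: "0 < p" and g: "\<And>a. a < p \<Longrightarrow> g a permutes {1..p ^ k}"
  defines "t' \<equiv> (p - t mod p) mod p"
  defines "g' \<equiv> (\<lambda>i. inv' (g ((i + t') mod p)))"
  shows "mk p k t g \<circ> mk p k t' g' = id" "mk p k t' g' \<circ> mk p k t g = id"
proof -
  have tt: "(t + t') mod p = 0"
  proof -
    have "(t + t') mod p = (t + (p - t mod p)) mod p" unfolding t'_def by (rule mod_add_right_eq)
    also have "\<dots> = (t mod p + (p - t mod p)) mod p" by (rule mod_add_left_eq[symmetric])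
    also have "\<dots> = 0" using p by (simp add: le_add_diff_inverse less_imp_le)
    finally show ?thesis .
  qed
  have tt2: "(t' + t) mod p = 0" using tt by (simp add: add.commute)
  have g'p: "g' a permutes {1..p ^ k}" if "a < p" for a
    unfolding g'_def using g[of "(a + t') mod p"] p by (simp add: permutes_inv)
  show "mk p k t g \<circ> mk p k t' g' = id"
  proof -
    have "mk p k t g \<circ> mk p k t' g' = mk p k ((t + t') mod p) (\<lambda>i. g ((i + t') mod p) \<circ> g' i)"
      by (rule mk_comp[OF p]) (use g'p in \<open>simp add: permutes_img\<close>)
    also have "\<dots> = mk p k 0 (\<lambda>_. id)"
    proof (rule mk_cong[OF p])
      fix a assume "a < p"
      have "(a + t') mod p < p" using p by simp
      thus "g ((a + t') mod p) \<circ> g' a = id" unfolding g'_def using g permutes_inv_o(1) by blast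
    qed (use tt in simp)
    finally show ?thesis using mk_id p by simp
  qed
  show "mk p k t' g' \<circ> mk p k t g = id"
  proof -
    have "mk p k t' g' \<circ> mk p k t g = mk p k ((t' + t) mod p) (\<lambda>i. g' ((i + t) mod p) \<circ> g i)"
      by (rule mk_comp[OF p]) (use g in \<open>simp add: permutes_img\<close>)
    also have "\<dots> = mk p k 0 (\<lambda>_. id)"
    proof (rule mk_cong[OF p])
      fix a assume a: "a < p"
      have "((a + t) mod p + t') mod p = (a + t + t') mod p" by (rule mod_add_left_eq)
      also have "\<dots> = (a + (t + t') mod p) mod p" by (simp add: mod_add_right_eq add.assoc)
      also have "\<dots> = a" using tt a by simp
      finally have "((a + t) mod p + t') mod p = a" .
      thus "(g' ((a + t) mod p) \<circ> g a) = id" using g[OF a] by (simp add: g'_def permutes_inv_o)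
    qed (use tt2 in simp)
    finally show ?thesis using mk_id p by simp
  qed
qed

lemma W_inv: "0 < p \<Longrightarrow> f \<in> W p k \<Longrightarrow> inv' f \<in> W p k"
proof (induction k arbitrary: f)
  case 0 thus ?case using inv_id by (simp add: id_def)
next
  case (Suc k)
  obtain t g where f: "f = mk p k t g" "t < p" "\<forall>a<p. g a \<in> W p k" using Suc by auto
  define t' where "t' = (p - t mod p) mod p"
  define g' where "g' = (\<lambda>i. inv' (g ((i + t') mod p)))"
  have gp: "\<And>a. a < p \<Longrightarrow> g a permutes {1..p ^ k}" using f W_perm Suc by blast
  have "inv' f = mk p k t' g'"
    unfolding f using mk_inverse[OF Suc.prems(1) gp, where t=t] by (intro inv_unique_comp) (auto simp: t'_def g'_def)
  moreover have "g' a \<in> W p k" for a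
    unfolding g'_def using Suc f by simp
  moreover have "t' < p" using Suc by (simp add: t'_def)
  ultimately show ?case by auto
qed

lemma W_subgroup: assumes p: "0 < p" shows "subgroup (W p k) (sym_group (p ^ k))"
proof (rule subgroup.intro)
  show "W p k \<subseteq> carrier (sym_group (p ^ k))" using W_perm p by (auto simp: sym_group_carrier)
  show "\<And>x y. x \<in> W p k \<Longrightarrow> y \<in> W p k \<Longrightarrow> x \<otimes>\<^bsub>sym_group (p ^ k)\<^esub> y \<in> W p k"
    using W_comp p by (simp add: sym_group_mult)
  show "\<one>\<^bsub>sym_group (p ^ k)\<^esub> \<in> W p k" using W_id p by (simp add: sym_group_one)
  show "\<And>x. x \<in> W p k \<Longrightarrow> inv\<^bsub>sym_group (p ^ k)\<^esub> x \<in> W p k"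
    using W_inv W_perm p by (simp add: sym_group_carrier)
qed



lemma W_Suc_img:
  assumes p: "0 < p"
  shows "W p (Suc k) = (\<lambda>(t,g). mk p k t g) ` ({..<p} \<times> PiE {..<p} (\<lambda>_. W p k))"
proof
  show "W p (Suc k) \<subseteq> (\<lambda>(t,g). mk p k t g) ` ({..<p} \<times> PiE {..<p} (\<lambda>_. W p k))"
  proof
    fix f assume "f \<in> W p (Suc k)"
    then obtain t g where f: "f = mk p k t g" "t < p" "\<forall>a<p. g a \<in> W p k" by auto
    have "f = mk p k t (restrict g {..<p})" unfolding f(1) by (rule mk_cong[OF p]) auto
    hence f2: "f = (\<lambda>(t,g). mk p k t g) (t, restrict g {..<p})" by simp
    have "(t, restrict g {..<p}) \<in> {..<p} \<times> PiE {..<p} (\<lambda>_. W p k)" using f by auto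
    with f2 show "f \<in> (\<lambda>(t,g). mk p k t g) ` ({..<p} \<times> PiE {..<p} (\<lambda>_. W p k))"
      by (rule image_eqI)
  qed
next
  show "(\<lambda>(t,g). mk p k t g) ` ({..<p} \<times> PiE {..<p} (\<lambda>_. W p k)) \<subseteq> W p (Suc k)"
    by (auto simp: PiE_def Pi_def)
qed

lemma mk_inj:
  assumes p: "0 < p"
  shows "inj_on (\<lambda>(t,g). mk p k t g) ({..<p} \<times> PiE {..<p} (\<lambda>_. W p k))"
proof (rule inj_onI, clarify)
  fix t g t' g'
  assume t: "t < p" "t' < p" and g: "g \<in> PiE {..<p} (\<lambda>_. W p k)" "g' \<in> PiE {..<p} (\<lambda>_. W p k)"
    and e: "mk p k t g = mk p k t' g'"
  have w1: "(1::nat) \<in> {1..p ^ k}" using p by simp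
  have e1: "enc p 0 1 = 1" by (simp add: enc_def)
  have "mk p k t g 1 = enc p (t mod p) (g 0 1)" using mk_enc[OF p p w1, of t g] e1 by simp
  moreover have "mk p k t' g' 1 = enc p (t' mod p) (g' 0 1)" using mk_enc[OF p p w1, of t' g'] e1 by simp
  ultimately have "dx p (enc p (t mod p) (g 0 1)) = dx p (enc p (t' mod p) (g' 0 1))" using e by simp
  hence tt: "t = t'" using t p by (simp add: dx_enc)
  have "g a = g' a" for a
  proof (cases "a < p")
    case False thus ?thesis using PiE_arb[OF g(1), of a] PiE_arb[OF g(2), of a] by simp
  next
    case True
    have "g a \<in> W p k" "g' a \<in> W p k" using PiE_mem[OF g(1), of a] PiE_mem[OF g(2), of a] True by auto
    hence ga: "g a permutes {1..p ^ k}" "g' a permutes {1..p ^ k}" using W_perm[OF p] by auto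
    show ?thesis
    proof
      fix w show "g a w = g' a w"
      proof (cases "w \<in> {1..p ^ k}")
        case False thus ?thesis using ga permutes_not_in by metis
      next
        case wr: True
        have r1: "g a w \<in> {1..p ^ k}" "g' a w \<in> {1..p ^ k}" using ga wr by (simp_all only: permutes_in_image)
        have "enc p ((a + t) mod p) (g a w) = mk p k t g (enc p a w)"
          using mk_enc[OF p True wr, of t g] by simp
        also have "\<dots> = mk p k t g' (enc p a w)" using e tt by simp
        also have "\<dots> = enc p ((a + t) mod p) (g' a w)" using mk_enc[OF p True wr, of t g'] by simp
        finally have "enc p ((a + t) mod p) (g a w) = enc p ((a + t) mod p) (g' a w)" .
        hence "dw p (enc p ((a + t) mod p) (g a w)) = dw p (enc p ((a + t) mod p) (g' a w))" by simp
        thus ?thesis using r1 p by (simp add: dw_enc)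
      qed
    qed
  qed
  thus "t = t' \<and> g = g'" using tt by auto
qed

fun cc :: "nat \<Rightarrow> nat \<Rightarrow> nat" where
  "cc p 0 = 0"
| "cc p (Suc k) = p ^ k + cc p k"

lemma cc_rec: "p * cc p k + 1 = p ^ k + cc p k"
  by (induction k) (auto simp: algebra_simps)

lemma card_W: assumes p: "0 < p" shows "card (W p k) = p ^ cc p k"
proof (induction k)
  case 0 thus ?case by simp
next
  case (Suc k)
  have "card (W p (Suc k)) = card ({..<p} \<times> PiE {..<p} (\<lambda>_. W p k))"
    unfolding W_Suc_img[OF p] by (rule card_image[OF mk_inj[OF p]])
  also have "\<dots> = p * (p ^ cc p k) ^ p" by (simp add: card_cartesian_product card_PiE Suc)
  also have "\<dots> = p ^ (p * cc p k + 1)" by (simp add: power_mult[symmetric] mult.commute)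
  also have "\<dots> = p ^ cc p (Suc k)" using cc_rec by simp
  finally show ?case .
qed

lemma fact_split: "fact (m + p) = fact m * (\<Prod>{m + 1..m + p} :: nat)"
proof -
  have "(\<Prod>{1..m + p} :: nat) = \<Prod>{1..m} * \<Prod>{m + 1..m + p}"
    by (rule prod.ub_add_nat) simp
  thus ?thesis by (simp add: fact_prod)
qed

lemma mult_fact:
  assumes pr: "prime (p::nat)"
  shows "multiplicity p (fact (p * n)) = n + multiplicity p (fact n)"
proof (induction n)
  case 0 thus ?case by simp
next
  case (Suc n)
  have p: "1 < p" using pr prime_gt_1_nat by blast
  have pe: "prime_elem p" using pr by simp
  let ?A = "{p * n + 1..<p * n + p}"
  have A: "{p * n + 1..p * n + p} = insert (p * n + p) ?A" using p by auto
  have m0: "multiplicity p i = 0" if "i \<in> ?A" for i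
  proof -
    define r where "r = i - p * n"
    have ir: "i = p * n + r" "1 \<le> r" "r < p" using that by (auto simp: r_def)
    have "i mod p = r" unfolding ir(1) using ir by simp
    hence "\<not> p dvd i" using ir by (auto simp: dvd_eq_mod_eq_0)
    thus ?thesis by (rule not_dvd_imp_multiplicity_0)
  qed
  have "multiplicity p (\<Prod>{p * n + 1..p * n + p}) = (\<Sum>i\<in>{p * n + 1..p * n + p}. multiplicity p i)"
    by (rule prime_elem_multiplicity_prod_distrib[OF pe]) auto
  also have "\<dots> = multiplicity p (p * n + p) + (\<Sum>i\<in>?A. multiplicity p i)" unfolding A by simp
  also have "\<dots> = multiplicity p (p * Suc n)" using m0 by (simp add: algebra_simps)
  also have "\<dots> = multiplicity p p + multiplicity p (Suc n)"
    by (rule prime_elem_multiplicity_mult_distrib[OF pe]) (use p in auto)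
  also have "\<dots> = 1 + multiplicity p (Suc n)" using multiplicity_prime[OF pe] by simp
  finally have M: "multiplicity p (\<Prod>{p * n + 1..p * n + p}) = 1 + multiplicity p (Suc n)" .
  have "multiplicity p (fact (p * Suc n)) = multiplicity p (fact (p * n) * \<Prod>{p * n + 1..p * n + p})"
    using fact_split[of "p * n" p] by (simp add: algebra_simps)
  also have "\<dots> = multiplicity p (fact (p * n)) + multiplicity p (\<Prod>{p * n + 1..p * n + p})"
    by (rule prime_elem_multiplicity_mult_distrib[OF pe]) auto
  also have "\<dots> = Suc n + (multiplicity p (Suc n) + multiplicity p (fact n))"
    using Suc M by simp
  also have "multiplicity p (Suc n) + multiplicity p (fact n) = multiplicity p (Suc n * fact n)"
    by (rule prime_elem_multiplicity_mult_distrib[OF pe, symmetric]) auto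
  also have "Suc n * fact n = (fact (Suc n) :: nat)" by (simp add: fact_Suc)
  finally show ?case .
qed

lemma mult_fact_pow: "prime (p::nat) \<Longrightarrow> multiplicity p (fact (p ^ k)) = cc p k"
proof (induction k)
  case 0 thus ?case by simp
next
  case (Suc k)
  have "multiplicity p (fact (p ^ Suc k)) = multiplicity p (fact (p * p ^ k))" by simp
  also have "\<dots> = p ^ k + multiplicity p (fact (p ^ k))" by (rule mult_fact[OF Suc.prems])
  finally show ?case using Suc by simp
qed



definition tau :: "nat \<Rightarrow> (nat \<Rightarrow> nat) \<Rightarrow> nat" where "tau p f = dx p (f 1)"
definition cmp :: "nat \<Rightarrow> nat \<Rightarrow> (nat \<Rightarrow> nat) \<Rightarrow> nat \<Rightarrow> nat \<Rightarrow> nat" where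
  "cmp p k f a = (\<lambda>w. if w \<in> {1..p ^ k} then dw p (f (enc p a w)) else w)"

fun sig :: "nat \<Rightarrow> nat \<Rightarrow> (nat \<Rightarrow> nat) \<Rightarrow> nat \<Rightarrow> nat" where
  "sig p 0 f j = 0"
| "sig p (Suc k) f j = (case j of 0 \<Rightarrow> tau p f | Suc j' \<Rightarrow> (\<Sum>a<p. sig p k (cmp p k f a) j') mod p)"

lemma enc01: "enc p 0 1 = 1" by (simp add: enc_def)

lemma tau_mk: assumes p: "0 < p" shows "tau p (mk p k t g) = t mod p"
proof -
  have w1: "(1::nat) \<in> {1..p ^ k}" using p by simp
  have "mk p k t g 1 = enc p (t mod p) (g 0 1)" using mk_enc[OF p p w1, of t g] enc01 by simp
  thus ?thesis using p by (simp add: tau_def dx_enc)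
qed

lemma cmp_mk:
  assumes p: "0 < p" and a: "a < p" and g: "g a permutes {1..p ^ k}"
  shows "cmp p k (mk p k t g) a = g a"
proof
  fix w show "cmp p k (mk p k t g) a w = g a w"
  proof (cases "w \<in> {1..p ^ k}")
    case False
    have "g a w = w" using g False by (rule permutes_not_in)
    thus ?thesis using False by (auto simp: cmp_def)
  next
    case True
    have r: "g a w \<in> {1..p ^ k}" using g True by (simp only: permutes_in_image)
    have "mk p k t g (enc p a w) = enc p ((a + t) mod p) (g a w)" by (rule mk_enc[OF p a True])
    moreover have "(a + t) mod p < p" using p by simp
    ultimately show ?thesis using True r by (simp add: cmp_def dw_enc)
  qed
qed

lemma sig_lt: "0 < p \<Longrightarrow> sig p k f j < p"
  by (cases k; cases j) (auto simp: tau_def dx_lt)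

lemma W_decomp:
  assumes "f \<in> W p (Suc k)"
  obtains t g where "f = mk p k t g" "t < p" "\<And>a. a < p \<Longrightarrow> g a \<in> W p k"
proof -
  from assms obtain t g where "f = mk p k t g" "t < p" "\<forall>a<p. g a \<in> W p k" by auto
  thus ?thesis using that by blast
qed

lemma W_mk: "t < p \<Longrightarrow> (\<And>a. a < p \<Longrightarrow> g a \<in> W p k) \<Longrightarrow> mk p k t g \<in> W p (Suc k)"
  by auto

lemma mk_comp_W:
  assumes p: "0 < p" and g': "\<And>a. a < p \<Longrightarrow> g' a \<in> W p k"
  shows "mk p k t g \<circ> mk p k t' g' = mk p k ((t + t') mod p) (\<lambda>i. g ((i + t') mod p) \<circ> g' i)"
proof (rule mk_comp[OF p])
  fix a assume "a < p"
  thus "g' a ` {1..p ^ k} \<subseteq> {1..p ^ k}" using g' W_perm[OF p] permutes_img by blast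
qed

lemma sig_hom:
  assumes p: "0 < p"
  shows "f \<in> W p k \<Longrightarrow> h \<in> W p k \<Longrightarrow> sig p k (f \<circ> h) j = (sig p k f j + sig p k h j) mod p"
proof (induction k arbitrary: f h j)
  case 0 thus ?case by simp
next
  case (Suc k)
  obtain t g where f: "f = mk p k t g" "t < p" "\<And>a. a < p \<Longrightarrow> g a \<in> W p k"
    using W_decomp[OF Suc.prems(1)] by blast
  obtain t' g' where h: "h = mk p k t' g'" "t' < p" "\<And>a. a < p \<Longrightarrow> g' a \<in> W p k"
    using W_decomp[OF Suc.prems(2)] by blast
  define H where "H = (\<lambda>i. g ((i + t') mod p) \<circ> g' i)"
  have fh: "f \<circ> h = mk p k ((t + t') mod p) H"
    unfolding f(1) h(1) H_def by (rule mk_comp_W[OF p h(3)])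
  have gs: "(i + t') mod p < p" for i using p by simp
  have HW: "H a \<in> W p k" if "a < p" for a
    unfolding H_def using W_comp[OF p f(3)[OF gs] h(3)[OF that]] .
  show ?case
  proof (cases j)
    case 0
    thus ?thesis using p f h fh by (simp add: tau_mk)
  next
    case (Suc j')
    have c1: "cmp p k (f \<circ> h) a = H a" if "a < p" for a
      unfolding fh using cmp_mk[OF p that] HW[OF that] W_perm[OF p] by blast
    have c2: "cmp p k f a = g a" if "a < p" for a
      unfolding f(1) using cmp_mk[OF p that] f(3)[OF that] W_perm[OF p] by blast
    have c3: "cmp p k h a = g' a" if "a < p" for a
      unfolding h(1) using cmp_mk[OF p that] h(3)[OF that] W_perm[OF p] by blast
    have "sig p (Suc k) (f \<circ> h) j = (\<Sum>a<p. sig p k (H a) j') mod p"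
      using Suc c1 by simp
    also have "\<dots> = (\<Sum>a<p. (sig p k (g ((a + t') mod p)) j' + sig p k (g' a) j') mod p) mod p"
      by (rule arg_cong[where f="\<lambda>x. x mod p"], rule sum.cong)
         (auto simp: H_def intro!: Suc.IH f(3) h(3) gs)
    also have "\<dots> = (\<Sum>a<p. sig p k (g ((a + t') mod p)) j' + sig p k (g' a) j') mod p"
      by (rule mod_sum_eq)
    also have "\<dots> = ((\<Sum>a<p. sig p k (g ((a + t') mod p)) j') + (\<Sum>a<p. sig p k (g' a) j')) mod p"
      by (simp add: sum.distrib)
    also have "(\<Sum>a<p. sig p k (g ((a + t') mod p)) j') = (\<Sum>a<p. sig p k (g a) j')"
      by (rule sum_mod_shift[OF p])
    also have "((\<Sum>a<p. sig p k (g a) j') + (\<Sum>a<p. sig p k (g' a) j')) mod p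
       = ((\<Sum>a<p. sig p k (g a) j') mod p + (\<Sum>a<p. sig p k (g' a) j') mod p) mod p"
      by (rule mod_add_eq[symmetric])
    also have "\<dots> = (sig p (Suc k) f j + sig p (Suc k) h j) mod p"
      using Suc c2 c3 by simp
    finally show ?thesis .
  qed
qed

lemma sig_id: assumes p: "0 < p" shows "sig p k id j = 0"
proof -
  define s where "s = sig p k id j"
  have "sig p k (id \<circ> id) j = (s + s) mod p" unfolding s_def by (rule sig_hom[OF p W_id[OF p] W_id[OF p]])
  hence e: "s = (s + s) mod p" by (simp add: s_def)
  have sl: "s < p" unfolding s_def by (rule sig_lt[OF p])
  show ?thesis
  proof (cases "s + s < p")
    case True hence "s = 0" using e by simp
    thus ?thesis by (simp add: s_def)
  next
    case False
    hence "(s + s) mod p = (s + s - p) mod p" by (simp add: le_mod_geq)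
    also have "\<dots> = s + s - p" using sl by simp
    finally show ?thesis using e sl by (simp add: s_def)
  qed
qed

lemma sig_inv: assumes p: "0 < p" and f: "f \<in> W p k"
  shows "(sig p k f j + sig p k (inv' f) j) mod p = 0"
proof -
  have "f \<circ> inv' f = id" using W_perm[OF p f] permutes_inv_o(1) by blast
  thus ?thesis using sig_hom[OF p f W_inv[OF p f], of j] sig_id[OF p] by simp
qed

definition K :: "nat \<Rightarrow> nat \<Rightarrow> (nat \<Rightarrow> nat) set" where
  "K p k = {f \<in> W p k. \<forall>j. sig p k f j = 0}"

lemma comm_in_K:
  assumes p: "0 < p" and f: "f \<in> W p k" and h: "h \<in> W p k"
  shows "f \<circ> h \<circ> inv' f \<circ> inv' h \<in> K p k"
proof -
  have fi: "inv' f \<in> W p k" and hi: "inv' h \<in> W p k" using W_inv[OF p] f h by auto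
  have fh: "f \<circ> h \<in> W p k" using W_comp[OF p f h] .
  have fhf: "f \<circ> h \<circ> inv' f \<in> W p k" using W_comp[OF p fh fi] .
  have W: "f \<circ> h \<circ> inv' f \<circ> inv' h \<in> W p k" using W_comp[OF p fhf hi] .
  have "sig p k (f \<circ> h \<circ> inv' f \<circ> inv' h) j = 0" for j
  proof -
    define a where "a = sig p k f j"
    define a' where "a' = sig p k (inv' f) j"
    define b where "b = sig p k h j"
    define b' where "b' = sig p k (inv' h) j"
    have "sig p k (f \<circ> h \<circ> inv' f \<circ> inv' h) j = (((a + b) mod p + a') mod p + b') mod p"
      unfolding a_def a'_def b_def b'_def
      using sig_hom[OF p fhf hi] sig_hom[OF p fh fi] sig_hom[OF p f h] by simp
    also have "\<dots> = (a + b + a' + b') mod p" by (simp add: mod_add_left_eq)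
    also have "\<dots> = ((a + a') + (b + b')) mod p" by (simp add: ac_simps)
    also have "\<dots> = ((a + a') mod p + (b + b') mod p) mod p" by (rule mod_add_eq[symmetric])
    also have "\<dots> = 0" using sig_inv[OF p f, of j] sig_inv[OF p h, of j]
      by (simp add: a_def a'_def b_def b'_def)
    finally show ?thesis .
  qed
  thus ?thesis using W by (simp add: K_def)
qed



fun gprod :: "(nat \<Rightarrow> nat \<Rightarrow> nat) \<Rightarrow> nat \<Rightarrow> nat \<Rightarrow> nat" where
  "gprod g 0 = id"
| "gprod g (Suc i) = g (Suc i) \<circ> gprod g i"

lemma gprod_W: assumes p: "0 < p" and g: "\<And>a. a < p \<Longrightarrow> g a \<in> W p k"
  shows "i < p \<Longrightarrow> gprod g i \<in> W p k"
proof (induction i)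
  case 0 thus ?case using W_id[OF p] by (simp add: id_def)
next
  case (Suc i) hence "gprod g i \<in> W p k" by simp
  hence "g (Suc i) \<circ> gprod g i \<in> W p k" using W_comp[OF p g[OF Suc.prems]] by blast
  thus ?case by (simp only: gprod.simps)
qed

lemma gprod_sig: assumes p: "0 < p" and g: "\<And>a. a < p \<Longrightarrow> g a \<in> W p k"
  shows "i < p \<Longrightarrow> sig p k (gprod g i) j = (\<Sum>a\<in>{1..i}. sig p k (g a) j) mod p"
proof (induction i)
  case 0 thus ?case using sig_id[OF p] by (simp add: id_def)
next
  case (Suc i)
  have "sig p k (gprod g (Suc i)) j = (sig p k (g (Suc i)) j + sig p k (gprod g i) j) mod p"
    using sig_hom[OF p g[OF Suc.prems] gprod_W[OF p g, where i=i]] Suc.prems by simp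
  also have "\<dots> = (sig p k (g (Suc i)) j + (\<Sum>a\<in>{1..i}. sig p k (g a) j)) mod p"
    using Suc by (simp add: mod_add_right_eq)
  also have "\<dots> = (\<Sum>a\<in>{1..Suc i}. sig p k (g a) j) mod p"
    by (simp add: add.commute)
  finally show ?case .
qed

lemma comm_K:
  assumes p1: "1 < p"
  shows "f \<in> K p k \<Longrightarrow> \<exists>x\<in>W p k. \<exists>y\<in>W p k. f = x \<circ> y \<circ> inv' x \<circ> inv' y"
proof (induction k arbitrary: f)
  case 0
  hence "f = id" by (simp add: K_def id_def)
  moreover have "id \<in> W p 0" by (simp add: id_def)
  ultimately show ?case by (metis comp_id inv_id)
next
  case (Suc k)
  have p: "0 < p" using p1 by simp
  have fW: "f \<in> W p (Suc k)" and fs: "\<And>j. sig p (Suc k) f j = 0" using Suc.prems by (auto simp: K_def)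
  obtain t g where f: "f = mk p k t g" "t < p" and gW: "\<And>a. a < p \<Longrightarrow> g a \<in> W p k"
    using W_decomp[OF fW] by blast
  have gp: "\<And>a. a < p \<Longrightarrow> g a permutes {1..p ^ k}" using gW W_perm[OF p] by blast
  have "t = 0" using fs[of 0] f tau_mk[OF p] by simp
  have cm: "cmp p k f a = g a" if "a < p" for a unfolding f(1) using cmp_mk[where g=g, OF p that gp[OF that]] .
  have hsum: "(\<Sum>a<p. sig p k (g a) j) mod p = 0" for j
  proof -
    have "(\<Sum>a<p. sig p k (cmp p k f a) j) = (\<Sum>a<p. sig p k (g a) j)"
      by (rule sum.cong) (auto simp: cm)
    thus ?thesis using fs[of "Suc j"] by simp
  qed
  define P where "P = gprod g (p - 1)"
  have PW: "P \<in> W p k" unfolding P_def using gprod_W[OF p gW] p by simp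
  have Pp: "P permutes {1..p ^ k}" using W_perm[OF p PW] .
  have PgW: "P \<circ> g 0 \<in> W p k" using W_comp[OF p PW gW[OF p]] .
  have "sig p k (P \<circ> g 0) j = 0" for j
  proof -
    have "sig p k (P \<circ> g 0) j = ((\<Sum>a\<in>{1..p-1}. sig p k (g a) j) mod p + sig p k (g 0) j) mod p"
      using sig_hom[OF p PW gW[OF p]] gprod_sig[OF p gW, where i="p - 1" and j=j] p by (simp add: P_def)
    also have "\<dots> = ((\<Sum>a\<in>{1..p-1}. sig p k (g a) j) + sig p k (g 0) j) mod p"
      by (simp add: mod_add_left_eq)
    also have "(\<Sum>a\<in>{1..p-1}. sig p k (g a) j) + sig p k (g 0) j = (\<Sum>a<p. sig p k (g a) j)"
    proof -
      have "{..<p} = insert 0 {1..p-1}" using p by auto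
      thus ?thesis by simp
    qed
    finally have e: "sig p k (P \<circ> g 0) j = (\<Sum>a<p. sig p k (g a) j) mod p" .
    show ?thesis unfolding e by (rule hsum)
  qed
  hence "P \<circ> g 0 \<in> K p k" using PgW by (simp add: K_def)
  then obtain x y where xW: "x \<in> W p k" and yW: "y \<in> W p k"
    and xy: "P \<circ> g 0 = x \<circ> y \<circ> inv' x \<circ> inv' y" using Suc.IH by blast
  have xp: "x permutes {1..p ^ k}" and yp: "y permutes {1..p ^ k}" using W_perm[OF p] xW yW by auto
  define \<alpha> where "\<alpha> = (\<lambda>i. gprod g i \<circ> inv' P \<circ> x)"
  define \<beta> where "\<beta> = (\<lambda>i. if i = p - 1 then y else (id :: nat \<Rightarrow> nat))"
  have \<alpha>W: "\<alpha> i \<in> W p k" if "i < p" for i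
    unfolding \<alpha>_def by (intro W_comp[OF p] gprod_W[OF p gW that] W_inv[OF p PW] xW)
  have \<beta>W: "\<beta> i \<in> W p k" for i using yW W_id[OF p] by (simp add: \<beta>_def)
  define A where "A = mk p k 0 \<alpha>"
  define B where "B = mk p k 1 \<beta>"
  have AW: "A \<in> W p (Suc k)" unfolding A_def using \<alpha>W p by (intro W_mk) auto
  have BW: "B \<in> W p (Suc k)" unfolding B_def using \<beta>W p1 by (intro W_mk) auto
  have Ap: "A permutes {1..p ^ Suc k}" by (rule W_perm[OF p AW])
  have Bp: "B permutes {1..p ^ Suc k}" by (rule W_perm[OF p BW])
  have pinv: "\<And>z. inv' P (P z) = z" "\<And>z. P (inv' P z) = z" using Pp permutes_inverses by metis+
  have xinv: "\<And>z. inv' x (x z) = z" using xp permutes_inverses by metis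
  have yinv: "\<And>z. inv' y (y z) = z" using yp permutes_inverses by metis
  have key: "inv' P (x (y z)) = g 0 (y (x z))" for z
  proof -
    have "P (g 0 (y (x z))) = x (y (inv' x (inv' y (y (x z)))))" using fun_cong[OF xy, of "y (x z)"] by simp
    also have "\<dots> = x (y z)" by (simp add: xinv yinv)
    finally have "P (g 0 (y (x z))) = x (y z)" .
    hence "inv' P (P (g 0 (y (x z)))) = inv' P (x (y z))" by simp
    thus ?thesis using pinv by simp
  qed
  have BA: "B \<circ> A = mk p k ((1 + 0) mod p) (\<lambda>i. \<beta> ((i + 0) mod p) \<circ> \<alpha> i)"
    unfolding A_def B_def by (rule mk_comp_W[OF p \<alpha>W])
  have BA': "B \<circ> A = mk p k 1 (\<lambda>i. \<beta> i \<circ> \<alpha> i)"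
    unfolding BA by (rule mk_cong[OF p]) (use p1 in auto)
  have AB: "A \<circ> B = mk p k ((0 + 1) mod p) (\<lambda>i. \<alpha> ((i + 1) mod p) \<circ> \<beta> i)"
    unfolding A_def B_def by (rule mk_comp_W[OF p \<beta>W])
  have fBA: "f \<circ> (B \<circ> A) = mk p k ((0 + 1) mod p) (\<lambda>i. g ((i + 1) mod p) \<circ> (\<beta> i \<circ> \<alpha> i))"
    unfolding BA' f(1) \<open>t = 0\<close> by (rule mk_comp_W[OF p]) (use \<alpha>W \<beta>W W_comp[OF p] in auto)
  have eq: "A \<circ> B = f \<circ> (B \<circ> A)"
    unfolding AB fBA
  proof (rule mk_cong[OF p])
    fix i assume i: "i < p"
    show "\<alpha> ((i + 1) mod p) \<circ> \<beta> i = g ((i + 1) mod p) \<circ> (\<beta> i \<circ> \<alpha> i)"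
    proof (cases "i = p - 1")
      case True
      hence i0: "(i + 1) mod p = 0" using p by simp
      hence i0': "Suc i mod p = 0" by simp
      have b: "\<beta> i = y" using True by (simp add: \<beta>_def)
      have gi: "gprod g i = P" using True by (simp add: P_def)
      show ?thesis
      proof
        fix z
        have ai: "\<alpha> i z = x z" unfolding \<alpha>_def using gi pinv by simp
        have a0: "\<alpha> 0 w = inv' P (x w)" for w by (simp add: \<alpha>_def)
        have "(\<alpha> ((i + 1) mod p) \<circ> \<beta> i) z = inv' P (x (y z))" by (simp add: i0 i0' b a0)
        also have "\<dots> = g 0 (y (x z))" by (rule key)
        also have "\<dots> = (g ((i + 1) mod p) \<circ> (\<beta> i \<circ> \<alpha> i)) z"
          by (simp add: i0 i0' b ai)
        finally show "(\<alpha> ((i + 1) mod p) \<circ> \<beta> i) z = (g ((i + 1) mod p) \<circ> (\<beta> i \<circ> \<alpha> i)) z" .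
      qed
    next
      case False
      hence i1: "(i + 1) mod p = Suc i" using i by simp
      hence i1': "Suc i mod p = Suc i" by simp
      show ?thesis using False by (simp add: i1 i1' \<alpha>_def \<beta>_def comp_assoc)
    qed
  qed simp
  have "f = A \<circ> B \<circ> inv' A \<circ> inv' B"
  proof
    fix z
    have "(A \<circ> B \<circ> inv' A \<circ> inv' B) z = (f \<circ> (B \<circ> A)) (inv' A (inv' B z))" using eq by simp
    also have "\<dots> = f z" using Ap Bp permutes_inverses by (metis comp_apply)
    finally show "f z = (A \<circ> B \<circ> inv' A \<circ> inv' B) z" by simp
  qed
  thus ?case using AW BW by blast
qed

lemma noncomm:
  assumes p1: "1 < p"
  shows "\<exists>x\<in>W p (Suc (Suc k)). \<exists>y\<in>W p (Suc (Suc k)). x \<circ> y \<noteq> y \<circ> x"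
proof -
  have p: "0 < p" using p1 by simp
  define h where "h = mk p k 1 (\<lambda>_. id)"
  have hW: "h \<in> W p (Suc k)" unfolding h_def using p1 W_id[OF p] by (intro W_mk) (auto simp del: W.simps)
  have w1: "(1::nat) \<in> {1..p ^ k}" using p by simp
  have h1: "h 1 = 2"
  proof -
    have "h 1 = enc p (1 mod p) (id 1)" unfolding h_def using mk_enc[OF p p w1, of 1 "\<lambda>_. id"] enc01 by simp
    thus ?thesis using p1 by (simp add: enc_def)
  qed
  define \<alpha> where "\<alpha> = (\<lambda>i::nat. if i = 0 then h else (id :: nat \<Rightarrow> nat))"
  define x where "x = mk p (Suc k) 0 \<alpha>"
  define y where "y = mk p (Suc k) 1 (\<lambda>_. id)"
  have xW: "x \<in> W p (Suc (Suc k))" unfolding x_def using p hW W_id[OF p] by (intro W_mk) (auto simp del: W.simps simp: \<alpha>_def)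
  have yW: "y \<in> W p (Suc (Suc k))" unfolding y_def using p1 W_id[OF p] by (intro W_mk) (auto simp del: W.simps)
  have r1: "(1::nat) \<in> {1..p ^ Suc k}" using p by simp
  have r2: "(2::nat) \<in> {1..p ^ Suc k}"
  proof -
    have "p ^ 1 \<le> p ^ Suc k" by (rule power_increasing) (use p in auto)
    hence "p \<le> p ^ Suc k" by (simp only: power_one_right)
    hence "2 \<le> p ^ Suc k" using p1 by linarith
    thus ?thesis by (simp only: atLeastAtMost_iff) simp
  qed
  have "(x \<circ> y) 1 = enc p 1 1"
  proof -
    have "y 1 = enc p 1 1" unfolding y_def using mk_enc[OF p p r1, of 1 "\<lambda>_. id"] enc01 p1 by simp
    moreover have "x (enc p 1 1) = enc p 1 1" unfolding x_def using mk_enc[OF p p1 r1, of 0 \<alpha>] p1 by (simp add: \<alpha>_def)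
    ultimately show ?thesis by simp
  qed
  moreover have "(y \<circ> x) 1 = enc p 1 2"
  proof -
    have "x 1 = enc p 0 2" unfolding x_def using mk_enc[OF p p r1, of 0 \<alpha>] enc01 h1 by (simp add: \<alpha>_def)
    moreover have "y (enc p 0 2) = enc p 1 2" unfolding y_def using mk_enc[OF p p r2, of 1 "\<lambda>_. id"] p1 by simp
    ultimately show ?thesis by simp
  qed
  moreover have "enc p 1 1 \<noteq> enc p 1 (2::nat)" using enc_inj[OF p1 p1] by simp
  ultimately have "x \<circ> y \<noteq> y \<circ> x" by metis
  thus ?thesis using xW yW by blast
qed

lemma K_subgroup: assumes p: "0 < p" shows "subgroup (K p k) (sym_group (p ^ k))"
proof (rule subgroup.intro)
  show "K p k \<subseteq> carrier (sym_group (p ^ k))" using W_perm p by (auto simp: sym_group_carrier K_def)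
  show "\<And>x y. x \<in> K p k \<Longrightarrow> y \<in> K p k \<Longrightarrow> x \<otimes>\<^bsub>sym_group (p ^ k)\<^esub> y \<in> K p k"
    using W_comp[OF p] sig_hom[OF p] by (simp add: sym_group_mult K_def)
  show "\<one>\<^bsub>sym_group (p ^ k)\<^esub> \<in> K p k" using W_id[OF p] sig_id[OF p] by (simp add: sym_group_one K_def)
  fix x assume x: "x \<in> K p k"
  have "sig p k (inv' x) j = 0" for j
    using sig_inv[OF p, of x k j] sig_lt[OF p, of k "inv' x" j] x by (simp add: K_def)
  thus "inv\<^bsub>sym_group (p ^ k)\<^esub> x \<in> K p k"
    using x W_inv[OF p] W_perm[OF p] by (simp add: sym_group_carrier K_def)
qed



definition cset :: "('a, 'b) monoid_scheme \<Rightarrow> 'a set \<Rightarrow> 'a set" where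
  "cset G H = {commutator G x y | x y. x \<in> H \<and> y \<in> H}"

lemma (in group) inv_cancel_l: "x \<in> carrier G \<Longrightarrow> y \<in> carrier G \<Longrightarrow> inv x \<otimes> (x \<otimes> y) = y"
  by (simp add: m_assoc[symmetric])
lemma (in group) inv_cancel_r: "x \<in> carrier G \<Longrightarrow> y \<in> carrier G \<Longrightarrow> x \<otimes> (inv x \<otimes> y) = y"
  by (simp add: m_assoc[symmetric])

lemma cw_one:
  assumes G: "group G" and H: "subgroup H G" and C: "subgroup (cset G H) G"
    and nt: "cset G H \<noteq> {\<one>\<^bsub>G\<^esub>}"
  shows "commutator_width (G\<lparr>carrier := H\<rparr>) = 1"
proof -
  interpret group G by (rule G)
  define H' where "H' = G\<lparr>carrier := H\<rparr>"
  have gH': "group H'" unfolding H'_def by (rule subgroup_imp_group[OF H])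
  have cH: "commutator H' x y = commutator G x y" if "x \<in> H" "y \<in> H" for x y
    using that H by (simp add: commutator_def H'_def)
  have e: "\<And>h1 h2. h1 \<otimes>\<^bsub>H'\<^esub> h2 \<otimes>\<^bsub>H'\<^esub> inv\<^bsub>H'\<^esub> h1 \<otimes>\<^bsub>H'\<^esub> inv\<^bsub>H'\<^esub> h2 = commutator H' h1 h2"
    by (simp add: commutator_def)
  have cr: "carrier H' = H" by (simp add: H'_def)
  have "derived_set H' (carrier H') = (\<Union>h1\<in>H. \<Union>h2\<in>H. {commutator H' h1 h2})"
    by (simp only: e cr)
  also have "\<dots> = (\<Union>h1\<in>H. \<Union>h2\<in>H. {commutator G h1 h2})"
    using cH by (intro SUP_cong refl) simp
  also have "\<dots> = cset G H" unfolding cset_def by blast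
  finally have ds: "derived_set H' (carrier H') = cset G H" .
  have CH: "cset G H \<subseteq> H"
    using H by (auto simp: cset_def commutator_def subgroup.m_closed subgroup.m_inv_closed)
  have CsH': "subgroup (cset G H) H'" unfolding H'_def by (rule subgroup_incl[OF C H CH])
  have der: "derived H' (carrier H') = cset G H"
  proof
    show "derived H' (carrier H') \<subseteq> cset G H"
      unfolding derived_def ds by (rule group.generate_subgroup_incl[OF gH' _ CsH']) simp
    show "cset G H \<subseteq> derived H' (carrier H')"
      unfolding derived_def ds by (rule subsetI, rule generate.incl)
  qed
  have one': "\<one>\<^bsub>H'\<^esub> = \<one>\<^bsub>G\<^esub>" by (simp add: H'_def)
  define Pr where "Pr = (\<lambda>c n. \<exists>xs ys. length xs = n \<and> length ys = n \<and>
      set xs \<subseteq> carrier H' \<and> set ys \<subseteq> carrier H' \<and>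
      c = foldr (\<lambda>(x, y) acc. commutator H' x y \<otimes>\<^bsub>H'\<^esub> acc) (zip xs ys) \<one>\<^bsub>H'\<^esub>)"
  have cl: "comm_length H' c = (LEAST n. Pr c n)" for c unfolding comm_length_def Pr_def ..
  have pr1: "Pr c 1" if cc: "c \<in> cset G H" for c
  proof -
    obtain x y where xy: "x \<in> H" "y \<in> H" "c = commutator G x y" using cc by (auto simp: cset_def)
    have "commutator G x y \<in> H" using CH cc xy by auto
    hence cg: "commutator G x y \<in> carrier G" using subgroup.mem_carrier[OF H] by blast
    show "Pr c 1" unfolding Pr_def
      by (rule exI[of _ "[x]"], rule exI[of _ "[y]"]) (use xy cH cg in \<open>auto simp: H'_def\<close>)
  qed
  have le1: "comm_length H' c \<le> 1" if "c \<in> cset G H" for c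
    unfolding cl by (rule Least_le) (rule pr1[OF that])
  obtain c where c: "c \<in> cset G H" "c \<noteq> \<one>\<^bsub>G\<^esub>" using nt C subgroup.one_closed by blast
  have eq1: "comm_length H' c = 1"
  proof -
    have n0: "\<not> Pr c 0" using c by (simp add: Pr_def one')
    have "Pr c (LEAST n. Pr c n)" by (rule LeastI[of _ 1]) (rule pr1[OF c(1)])
    hence "(LEAST n. Pr c n) \<noteq> 0" using n0 by metis
    hence "comm_length H' c \<noteq> 0" unfolding cl .
    thus ?thesis using le1[OF c(1)] by simp
  qed
  have mem: "1 \<in> comm_length H' ` cset G H" by (rule image_eqI[where f="comm_length H'", OF eq1[symmetric] c(1)])
  show ?thesis
    unfolding commutator_width_def H'_def[symmetric] der
    by (rule cSup_eq_maximum[OF mem]) (use le1 in auto)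
qed



lemma (in group) conj_set_eq:
  assumes g: "g \<in> carrier G" and S: "S \<subseteq> carrier G"
  shows "(\<lambda>x. g \<otimes> x \<otimes> inv g) ` S = g <# S #> inv g"
  unfolding l_coset_def r_coset_def by auto

lemma (in group) conj_subgroup:
  assumes g: "g \<in> carrier G" and S: "subgroup S G"
  shows "subgroup ((\<lambda>x. g \<otimes> x \<otimes> inv g) ` S) G"
proof -
  have "subgroup (inv (inv g) <# S #> inv g) G"
    by (rule subgroup_conjugation_is_surj1) (use g S in auto)
  thus ?thesis using conj_set_eq[OF g subgroup.subset[OF S]] g by simp
qed

lemma (in group) conj_comm:
  assumes g: "g \<in> carrier G" and x: "x \<in> carrier G" and y: "y \<in> carrier G"
  shows "commutator G (g \<otimes> x \<otimes> inv g) (g \<otimes> y \<otimes> inv g) = g \<otimes> commutator G x y \<otimes> inv g"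
proof -
  have ix: "inv (g \<otimes> x \<otimes> inv g) = g \<otimes> inv x \<otimes> inv g" using g x by (simp add: inv_mult_group m_assoc)
  have iy: "inv (g \<otimes> y \<otimes> inv g) = g \<otimes> inv y \<otimes> inv g" using g y by (simp add: inv_mult_group m_assoc)
  show ?thesis unfolding commutator_def ix iy using g x y by (simp add: m_assoc inv_cancel_l)
qed

lemma (in group) conj_cset:
  assumes g: "g \<in> carrier G" and Q: "subgroup Q G"
  shows "cset G ((\<lambda>x. g \<otimes> x \<otimes> inv g) ` Q) = (\<lambda>x. g \<otimes> x \<otimes> inv g) ` cset G Q"
proof -
  have Qc: "\<And>x. x \<in> Q \<Longrightarrow> x \<in> carrier G" using subgroup.mem_carrier[OF Q] by blast
  show ?thesis unfolding cset_def using conj_comm[OF g] Qc by (auto simp: image_iff) (metis)+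
qed

lemma (in group) conj_transfer:
  assumes g: "g \<in> carrier G" and Q: "subgroup Q G" and CQ: "subgroup (cset G Q) G"
    and nt: "cset G Q \<noteq> {\<one>}"
  shows "subgroup ((\<lambda>x. g \<otimes> x \<otimes> inv g) ` Q) G"
    "subgroup (cset G ((\<lambda>x. g \<otimes> x \<otimes> inv g) ` Q)) G"
    "cset G ((\<lambda>x. g \<otimes> x \<otimes> inv g) ` Q) \<noteq> {\<one>}"
proof -
  show "subgroup ((\<lambda>x. g \<otimes> x \<otimes> inv g) ` Q) G" by (rule conj_subgroup[OF g Q])
  show "subgroup (cset G ((\<lambda>x. g \<otimes> x \<otimes> inv g) ` Q)) G"
    unfolding conj_cset[OF g Q] by (rule conj_subgroup[OF g CQ])
  obtain c where c: "c \<in> cset G Q" "c \<noteq> \<one>" using nt subgroup.one_closed[OF CQ] by blast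
  have cc: "c \<in> carrier G" using c subgroup.mem_carrier[OF CQ] by blast
  have "g \<otimes> c \<otimes> inv g \<noteq> \<one>"
  proof
    assume "g \<otimes> c \<otimes> inv g = \<one>"
    hence "g \<otimes> c \<otimes> inv g = g \<otimes> \<one> \<otimes> inv g" using g by simp
    hence "c = \<one>" using conjugation_is_inj[OF g cc one_closed] by blast
    thus False using c by simp
  qed
  thus "cset G ((\<lambda>x. g \<otimes> x \<otimes> inv g) ` Q) \<noteq> {\<one>}"
    unfolding conj_cset[OF g Q] using c by blast
qed



lemma (in group) rcosets_subset: "subgroup P G \<Longrightarrow> C \<in> rcosets P \<Longrightarrow> C \<subseteq> carrier G"
  unfolding RCOSETS_def r_coset_def using subgroup.mem_carrier by fastforce

lemma (in group) rcosets_mult: "subgroup P G \<Longrightarrow> C \<in> rcosets P \<Longrightarrow> x \<in> carrier G \<Longrightarrow> C #> x \<in> rcosets P"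
proof -
  assume P: "subgroup P G" and C: "C \<in> rcosets P" and x: "x \<in> carrier G"
  then obtain y where y: "y \<in> carrier G" "C = P #> y" unfolding RCOSETS_def by auto
  have "C #> x = P #> (y \<otimes> x)" using y x coset_mult_assoc subgroup.subset[OF P] by simp
  thus ?thesis using y x unfolding RCOSETS_def by auto
qed

lemma (in group) sylow_action:
  assumes P: "subgroup P G" and Q: "subgroup Q G"
  shows "group_action (G\<lparr>carrier := Q\<rparr>) (rcosets P) (\<lambda>q. \<lambda>C \<in> rcosets P. C #> inv q)"
proof -
  let ?E = "rcosets P"
  let ?\<phi> = "\<lambda>q. \<lambda>C \<in> rcosets P. C #> inv q"
  have Qc: "\<And>q. q \<in> Q \<Longrightarrow> q \<in> carrier G" using subgroup.mem_carrier[OF Q] by blast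
  have bk1: "(C #> inv q) #> q = C" if "C \<in> ?E" "q \<in> carrier G" for C q
    using that rcosets_subset[OF P] by (simp add: coset_mult_assoc)
  have bk2: "(C #> q) #> inv q = C" if "C \<in> ?E" "q \<in> carrier G" for C q
    using that rcosets_subset[OF P] by (simp add: coset_mult_assoc)
  have bij: "?\<phi> q \<in> Bij ?E" if q: "q \<in> Q" for q
  proof -
    have qc: "q \<in> carrier G" using Qc q .
    have "bij_betw (?\<phi> q) ?E ?E"
      by (rule bij_betw_byWitness[where f'="\<lambda>C. C #> q"])
         (use qc bk1 bk2 rcosets_mult[OF P] in auto)
    thus ?thesis unfolding Bij_def by simp
  qed
  have hom: "?\<phi> \<in> hom (G\<lparr>carrier := Q\<rparr>) (BijGroup ?E)"
  proof (rule homI)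
    fix q assume "q \<in> carrier (G\<lparr>carrier := Q\<rparr>)"
    thus "?\<phi> q \<in> carrier (BijGroup ?E)" using bij by (simp add: BijGroup_def)
  next
    fix q1 q2 assume q: "q1 \<in> carrier (G\<lparr>carrier := Q\<rparr>)" "q2 \<in> carrier (G\<lparr>carrier := Q\<rparr>)"
    hence q': "q1 \<in> Q" "q2 \<in> Q" by auto
    have qc: "q1 \<in> carrier G" "q2 \<in> carrier G" using Qc q' by auto
    have "?\<phi> (q1 \<otimes> q2) = compose ?E (?\<phi> q1) (?\<phi> q2)"
    proof
      fix C show "?\<phi> (q1 \<otimes> q2) C = compose ?E (?\<phi> q1) (?\<phi> q2) C"
        using qc rcosets_mult[OF P] rcosets_subset[OF P]
        by (auto simp: compose_def inv_mult_group coset_mult_assoc)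
    qed
    thus "?\<phi> (q1 \<otimes>\<^bsub>G\<lparr>carrier := Q\<rparr>\<^esub> q2) = ?\<phi> q1 \<otimes>\<^bsub>BijGroup ?E\<^esub> ?\<phi> q2"
      using bij q' by (simp add: BijGroup_def)
  qed
  show ?thesis
    unfolding group_action_def group_hom_def group_hom_axioms_def
    using subgroup_imp_group[OF Q] group_BijGroup hom by simp
qed

lemma (in group) sylow_conj:
  assumes fin: "finite (carrier G)" and pr: "prime p"
    and P: "subgroup P G" and Q: "subgroup Q G"
    and cP: "card P = p ^ multiplicity p (order G)" and cQ: "card Q = p ^ multiplicity p (order G)"
  shows "\<exists>g\<in>carrier G. P = (\<lambda>x. g \<otimes> x \<otimes> inv g) ` Q"
proof -
  let ?a = "multiplicity p (order G)"
  let ?E = "rcosets P"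
  let ?\<phi> = "\<lambda>q. \<lambda>C \<in> rcosets P. C #> inv q"
  let ?Q = "G\<lparr>carrier := Q\<rparr>"
  interpret A: group_action ?Q ?E ?\<phi> by (rule sylow_action[OF P Q])
  have Qc: "\<And>q. q \<in> Q \<Longrightarrow> q \<in> carrier G" using subgroup.mem_carrier[OF Q] by blast
  have lag: "card ?E * card P = order G" by (rule lagrange[OF P])
  have pos: "0 < p ^ ?a" using pr prime_gt_0_nat by simp
  have cE: "card ?E = order G div p ^ ?a" using lag cP pos by (metis nonzero_mult_div_cancel_right neq0_conv)
  have oG: "order G \<noteq> 0" using fin order_gt_0_iff_finite by auto
  have nu: "\<not> is_unit p" using prime_gt_1_nat[OF pr] by simp
  have ndvd: "\<not> p dvd card ?E" unfolding cE by (rule multiplicity_decompose) (use oG nu in auto)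
  have finE: "finite ?E"
  proof -
    have "?E \<subseteq> Pow (carrier G)" using rcosets_subset[OF P] by blast
    thus ?thesis using fin finite_subset by blast
  qed
  have oQ: "order ?Q = p ^ ?a" using cQ by (simp add: order_def)
  have "\<exists>C\<in>?E. card (orbit ?Q ?\<phi> C) = 1"
  proof (rule ccontr)
    assume "\<not> ?thesis"
    hence n1: "\<And>C. C \<in> ?E \<Longrightarrow> card (orbit ?Q ?\<phi> C) \<noteq> 1" by blast
    have dv: "p dvd card orb" if orbm: "orb \<in> orbits ?Q ?E ?\<phi>" for orb
    proof -
      obtain C where C: "C \<in> ?E" "orb = orbit ?Q ?\<phi> C" using orbm unfolding orbits_def by blast
      have "card (orbit ?Q ?\<phi> C) dvd p ^ ?a"
        using A.orbit_stabilizer_theorem[OF C(1)] oQ by (metis dvd_triv_left)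
      then obtain i where i: "i \<le> ?a" "card (orbit ?Q ?\<phi> C) = p ^ i"
        using divides_primepow_nat[OF pr] by blast
      have "i \<noteq> 0" using n1[OF C(1)] i by auto
      hence "p dvd p ^ i" by simp
      thus ?thesis using C i by simp
    qed
    have "(\<Sum>orb\<in>orbits ?Q ?E ?\<phi>. \<Sum>x\<in>orb. (1::nat)) = (\<Sum>x\<in>?E. 1)"
      by (rule A.disjoint_sum[OF finE])
    hence "(\<Sum>orb\<in>orbits ?Q ?E ?\<phi>. card orb) = card ?E" by simp
    moreover have "p dvd (\<Sum>orb\<in>orbits ?Q ?E ?\<phi>. card orb)" by (rule dvd_sum) (rule dv)
    ultimately show False using ndvd by simp
  qed
  then obtain C where C: "C \<in> ?E" "card (orbit ?Q ?\<phi> C) = 1" by blast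
  have Cin: "C \<in> orbit ?Q ?\<phi> C" using A.orbit_refl[OF C(1)] .
  have fx: "C #> inv q = C" if q: "q \<in> Q" for q
  proof -
    have "?\<phi> q C \<in> orbit ?Q ?\<phi> C" unfolding orbit_def using q by auto
    moreover obtain z where "orbit ?Q ?\<phi> C = {z}" using C(2) card_1_singletonE by blast
    ultimately have "?\<phi> q C = C" using Cin by (metis singletonD)
    thus ?thesis using C(1) by simp
  qed
  obtain x where x: "x \<in> carrier G" "C = P #> x" using C(1) unfolding RCOSETS_def by auto
  have inP: "x \<otimes> q \<otimes> inv x \<in> P" if q: "q \<in> Q" for q
  proof -
    have iq: "inv q \<in> Q" using q subgroup.m_inv_closed[OF Q] by blast
    have qc: "q \<in> carrier G" using Qc q .
    have "P #> (x \<otimes> q) = P #> x"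
      using fx[OF iq] x qc coset_mult_assoc subgroup.subset[OF P] by simp
    moreover have "x \<otimes> q \<in> P #> (x \<otimes> q)" using rcos_self[OF _ P] x qc by simp
    ultimately have "x \<otimes> q \<in> P #> x" by simp
    then obtain h where h: "h \<in> P" "x \<otimes> q = h \<otimes> x" unfolding r_coset_def by auto
    have hc: "h \<in> carrier G" using h subgroup.mem_carrier[OF P] by blast
    have "x \<otimes> q \<otimes> inv x = h" using h hc x by (simp add: m_assoc)
    thus ?thesis using h by simp
  qed
  have sub: "(\<lambda>y. x \<otimes> y \<otimes> inv x) ` Q \<subseteq> P" using inP by blast
  have inj: "inj_on (\<lambda>y. x \<otimes> y \<otimes> inv x) Q"
    by (rule inj_onI) (use conjugation_is_inj x Qc in blast)
  have finP: "finite P" using fin subgroup.subset[OF P] finite_subset by blast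
  have "card ((\<lambda>y. x \<otimes> y \<otimes> inv x) ` Q) = card P" using card_image[OF inj] cP cQ by simp
  hence "(\<lambda>y. x \<otimes> y \<otimes> inv x) ` Q = P" using card_subset_eq[OF finP sub] by blast
  thus ?thesis using x by blast
qed



lemma (in group) comm_one_imp:
  assumes x: "x \<in> carrier G" and y: "y \<in> carrier G" and c: "commutator G x y = \<one>"
  shows "x \<otimes> y = y \<otimes> x"
proof -
  have "x \<otimes> y = commutator G x y \<otimes> (y \<otimes> x)"
    unfolding commutator_def using x y by (simp add: m_assoc inv_cancel_l)
  thus ?thesis using c x y by simp
qed

lemma sym_part:
  assumes pr: "prime (p::nat)" and k: "k \<ge> 2" and sy: "is_sylow p (sym_group (p ^ k)) P"
  shows "commutator_width ((sym_group (p ^ k)) \<lparr>carrier := P\<rparr>) = 1"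
proof -
  let ?N = "p ^ k"
  let ?S = "sym_group ?N"
  have p1: "1 < p" using prime_gt_1_nat[OF pr] .
  have p: "0 < p" using p1 by simp
  interpret S: group ?S by (rule sym_group_is_group)
  have fin: "finite (carrier ?S)" by (simp add: sym_group_carrier[abs_def] finite_permutations sym_group_def)
  have oS: "order ?S = fact ?N" by (simp add: order_def sym_group_card_carrier)
  have P: "subgroup P ?S" and cP: "card P = p ^ multiplicity p (order ?S)"
    using sy by (auto simp: is_sylow_def)
  have WS: "subgroup (W p k) ?S" by (rule W_subgroup[OF p])
  have cW: "card (W p k) = p ^ multiplicity p (order ?S)"
    unfolding oS mult_fact_pow[OF pr] by (rule card_W[OF p])
  obtain g where g: "g \<in> carrier ?S" and Pg: "P = (\<lambda>x. g \<otimes>\<^bsub>?S\<^esub> x \<otimes>\<^bsub>?S\<^esub> inv\<^bsub>?S\<^esub> g) ` W p k"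
    using S.sylow_conj[OF fin pr P WS cP cW] by blast
  have Wc: "\<And>x. x \<in> W p k \<Longrightarrow> x \<in> carrier ?S" using W_perm[OF p] by (simp add: sym_group_carrier)
  have comm_eq: "commutator ?S x y = x \<circ> y \<circ> inv' x \<circ> inv' y" if "x \<in> W p k" "y \<in> W p k" for x y
    using Wc that by (simp add: commutator_def sym_group_mult)
  have CK: "cset ?S (W p k) = K p k"
  proof
    show "cset ?S (W p k) \<subseteq> K p k"
      unfolding cset_def using comm_eq comm_in_K[OF p] by auto
    show "K p k \<subseteq> cset ?S (W p k)"
    proof
      fix f assume "f \<in> K p k"
      then obtain x y where xy: "x \<in> W p k" "y \<in> W p k" "f = x \<circ> y \<circ> inv' x \<circ> inv' y"
        using comm_K[OF p1] by blast
      hence "f = commutator ?S x y" using comm_eq by simp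
      thus "f \<in> cset ?S (W p k)" unfolding cset_def using xy by blast
    qed
  qed
  have CS: "subgroup (cset ?S (W p k)) ?S" unfolding CK by (rule K_subgroup[OF p])
  obtain k' where k': "k = Suc (Suc k')" using k by (metis add_2_eq_Suc le_Suc_ex)
  obtain x y where xy: "x \<in> W p k" "y \<in> W p k" "x \<circ> y \<noteq> y \<circ> x"
    using noncomm[OF p1, of k'] k' by blast
  have "commutator ?S x y \<noteq> \<one>\<^bsub>?S\<^esub>"
  proof
    assume "commutator ?S x y = \<one>\<^bsub>?S\<^esub>"
    hence "x \<otimes>\<^bsub>?S\<^esub> y = y \<otimes>\<^bsub>?S\<^esub> x" using S.comm_one_imp Wc xy by blast
    thus False using xy by (simp add: sym_group_mult)
  qed
  moreover have "commutator ?S x y \<in> cset ?S (W p k)" unfolding cset_def using xy by blast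
  ultimately have nt: "cset ?S (W p k) \<noteq> {\<one>\<^bsub>?S\<^esub>}" by blast
  have T: "subgroup P ?S" "subgroup (cset ?S P) ?S" "cset ?S P \<noteq> {\<one>\<^bsub>?S\<^esub>}"
    unfolding Pg using S.conj_transfer[OF g WS CS nt] by auto
  show ?thesis by (rule cw_one[OF sym_group_is_group T])
qed

theorem mainTheorem8:
  shows "(\<forall>(p::nat) k P. prime p \<and> k \<ge> 2 \<and> is_sylow p (sym_group (p ^ k)) P \<longrightarrow>
            commutator_width ((sym_group (p ^ k)) \<lparr>carrier := P\<rparr>) = 1)
       \<and> (\<forall>(p::nat) k P. prime p \<and> p > 2 \<and> k \<ge> 2 \<and> is_sylow p (alt_group (p ^ k)) P \<longrightarrow>
            commutator_width ((alt_group (p ^ k)) \<lparr>carrier := P\<rparr>) = 1)"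
proof (intro conjI allI impI)
  fix p k P
  assume "prime (p::nat) \<and> k \<ge> 2 \<and> is_sylow p (sym_group (p ^ k)) P"
  thus "commutator_width ((sym_group (p ^ k)) \<lparr>carrier := P\<rparr>) = 1" using sym_part by blast
next
  fix p k P
  assume a: "prime (p::nat) \<and> p > 2 \<and> k \<ge> 2 \<and> is_sylow p (alt_group (p ^ k)) P"
  hence pr: "prime p" and p2: "p > 2" and k: "k \<ge> 2" and sy: "is_sylow p (alt_group (p ^ k)) P" by auto
  let ?N = "p ^ k"
  have N2: "?N \<ge> 2"
  proof -
    have "p ^ 1 \<le> p ^ k" by (rule power_increasing) (use k p2 in auto)
    thus ?thesis using p2 by simp
  qed
  have PA: "subgroup P (alt_group ?N)" and cP: "card P = p ^ multiplicity p (order (alt_group ?N))"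
    using sy by (auto simp: is_sylow_def)
  have PS: "subgroup P (sym_group ?N)"
    using group.incl_subgroup[OF sym_group_is_group alt_group_is_subgroup] PA
    by (simp add: alt_group_def)
  have two: "2 * order (alt_group ?N) = fact ?N" using alt_group_card_carrier[OF N2] by (simp add: order_def)
  have pe: "prime_elem p" using pr by simp
  have oA: "order (alt_group ?N) \<noteq> 0" using two by (metis fact_nonzero mult_0_right)
  have "multiplicity p (fact ?N :: nat) = multiplicity p (2::nat) + multiplicity p (order (alt_group ?N))"
    unfolding two[symmetric] by (rule prime_elem_multiplicity_mult_distrib[OF pe]) (use oA in auto)
  moreover have "multiplicity p (2::nat) = 0"
  proof (rule not_dvd_imp_multiplicity_0)
    show "\<not> p dvd 2" using p2 by (auto dest: dvd_imp_le)
  qed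
  ultimately have "multiplicity p (order (alt_group ?N)) = multiplicity p (order (sym_group ?N))"
    by (simp add: order_def sym_group_card_carrier)
  hence "is_sylow p (sym_group ?N) P" using PS cP by (simp add: is_sylow_def)
  hence "commutator_width ((sym_group ?N) \<lparr>carrier := P\<rparr>) = 1" using sym_part pr k by blast
  moreover have "(alt_group ?N) \<lparr>carrier := P\<rparr> = (sym_group ?N) \<lparr>carrier := P\<rparr>" by (simp add: alt_group_def)
  ultimately show "commutator_width ((alt_group ?N) \<lparr>carrier := P\<rparr>) = 1" by simp
qed

end
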